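(* Let $C\subseteq\mathbb R^d$ be a compact convex set, let $A\subseteq\mathbb R^d$ be measurable, and let $A'$ be a homothet of $-C$ (a set of the form $x+\lambda(-C)$ with $\lambda>0$) with $\mathrm{vol}(A)=\mathrm{vol}(A')$. Then $$\mathrm{vol}\Big(\bigcap_{a\in A}(a+C)\Big)\le\mathrm{vol}\Big(\bigcap_{a\in A'}(a+C)\Big).$$
   Context: $\mathrm{vol}$ denotes $d$-dimensional Lebesgue measure. *)

theory Defs
  imports "HOL-Analysis.Analysis"
begin

end

theory Submission
  imports Defs
begin

lemma amgm:
  fixes x :: "'b \<Rightarrow> real"
  assumes "finite I" "I \<noteq> {}" "\<And>i. i \<in> I \<Longrightarrow> x i > 0"
  shows "(\<Prod>i\<in>I. x i) powr (1 / card I) \<le> (\<Sum>i\<in>I. x i) / card I"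
proof -
  have cI: "card I > 0" using assms by auto
  have "exp (\<Sum>i\<in>I. (1/card I) *\<^sub>R ln (x i)) \<le> (\<Sum>i\<in>I. (1/card I) * exp (ln (x i)))"
    by (rule convex_on_sum[OF assms(1,2) exp_convex]) (use cI in auto)
  moreover have "(\<Sum>i\<in>I. (1/card I) *\<^sub>R ln (x i)) = (1/card I) * ln (\<Prod>i\<in>I. x i)"
    using assms by (subst ln_prod) (auto simp: sum_divide_distrib[symmetric], metis less_irrefl)
  moreover have "(\<Prod>i\<in>I. x i) > 0" using assms by (simp add: prod_pos)
  moreover have "(\<Sum>i\<in>I. (1/card I) * exp (ln (x i))) = (\<Sum>i\<in>I. x i) / card I"
    using assms by (simp add: sum_divide_distrib[symmetric])
  ultimately show ?thesis by (simp add: powr_def mult.commute)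
qed

lemma box_ineq:
  fixes s r :: "'b \<Rightarrow> real"
  assumes "finite I" "I \<noteq> {}" "\<And>i. i \<in> I \<Longrightarrow> s i > 0" "\<And>i. i \<in> I \<Longrightarrow> r i > 0"
  shows "(\<Prod>i\<in>I. s i) powr (1 / card I) + (\<Prod>i\<in>I. r i) powr (1 / card I)
         \<le> (\<Prod>i\<in>I. s i + r i) powr (1 / card I)"
proof -
  let ?n = "card I"
  have cI: "card I > 0" using assms by auto
  have wpos: "(\<Prod>i\<in>I. s i + r i) > 0" using assms by (simp add: prod_pos add_pos_pos)
  have a: "(\<Prod>i\<in>I. s i / (s i + r i)) powr (1/?n) \<le> (\<Sum>i\<in>I. s i / (s i + r i)) / ?n"
    by (rule amgm) (use assms in \<open>auto intro!: divide_pos_pos add_pos_pos\<close>)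
  have b: "(\<Prod>i\<in>I. r i / (s i + r i)) powr (1/?n) \<le> (\<Sum>i\<in>I. r i / (s i + r i)) / ?n"
    by (rule amgm) (use assms in \<open>auto intro!: divide_pos_pos add_pos_pos\<close>)
  have sum1: "(\<Sum>i\<in>I. s i / (s i + r i)) + (\<Sum>i\<in>I. r i / (s i + r i)) = ?n"
  proof -
    have "(\<Sum>i\<in>I. s i / (s i + r i)) + (\<Sum>i\<in>I. r i / (s i + r i)) = (\<Sum>i\<in>I. 1)"
      unfolding sum.distrib[symmetric]
      by (rule sum.cong) (use assms in \<open>auto simp: add_divide_distrib[symmetric] intro!: divide_self\<close>,
          metis add_pos_pos less_irrefl)
    then show ?thesis by simp
  qed
  have "(\<Prod>i\<in>I. s i / (s i + r i)) = (\<Prod>i\<in>I. s i) / (\<Prod>i\<in>I. s i + r i)"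
    by (simp add: prod_dividef)
  moreover have "(\<Prod>i\<in>I. r i / (s i + r i)) = (\<Prod>i\<in>I. r i) / (\<Prod>i\<in>I. s i + r i)"
    by (simp add: prod_dividef)
  ultimately have "(\<Prod>i\<in>I. s i) powr (1/?n) / (\<Prod>i\<in>I. s i + r i) powr (1/?n)
       + (\<Prod>i\<in>I. r i) powr (1/?n) / (\<Prod>i\<in>I. s i + r i) powr (1/?n) \<le>
       (\<Sum>i\<in>I. s i / (s i + r i)) / ?n + (\<Sum>i\<in>I. r i / (s i + r i)) / ?n"
    using a b assms
    by (intro add_mono) (simp_all add: powr_divide prod_nonneg less_imp_le)
  also have "\<dots> = 1" using sum1 cI by (simp add: add_divide_distrib[symmetric])
  finally have "(\<Prod>i\<in>I. s i) powr (1/?n) / (\<Prod>i\<in>I. s i + r i) powr (1/?n)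
       + (\<Prod>i\<in>I. r i) powr (1/?n) / (\<Prod>i\<in>I. s i + r i) powr (1/?n) \<le> 1" .
  then show ?thesis using wpos
    by (simp add: add_divide_distrib[symmetric] divide_le_eq)
qed

definition msum :: "'a::euclidean_space set \<Rightarrow> 'a set \<Rightarrow> 'a set" where
  "msum S T = {x + y | x y. x \<in> S \<and> y \<in> T}"

lemma msum_cbox:
  fixes u v p q :: "'a::euclidean_space"
  assumes "\<And>i. i \<in> Basis \<Longrightarrow> u \<bullet> i < v \<bullet> i" "\<And>i. i \<in> Basis \<Longrightarrow> p \<bullet> i < q \<bullet> i"
  shows "cbox (u + p) (v + q) \<subseteq> msum (cbox u v) (cbox p q)"
proof
  fix z assume z: "z \<in> cbox (u + p) (v + q)"
  define th where "th i = (z \<bullet> i - u \<bullet> i - p \<bullet> i) / ((v \<bullet> i - u \<bullet> i) + (q \<bullet> i - p \<bullet> i))" for i :: 'a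
  define x where "x = (\<Sum>i\<in>Basis. (u \<bullet> i + (v \<bullet> i - u \<bullet> i) * th i) *\<^sub>R i)"
  have xi: "x \<bullet> i = u \<bullet> i + (v \<bullet> i - u \<bullet> i) * th i" if "i \<in> Basis" for i
    using that by (simp add: x_def inner_sum_left inner_Basis if_distrib cong: if_cong)
  have th01: "0 \<le> th i \<and> th i \<le> 1" if "i \<in> Basis" for i
    using z that assms[OF that] by (auto simp: th_def mem_box inner_add_left divide_simps)
  have "x \<in> cbox u v"
    unfolding mem_box
  proof (intro ballI conjI)
    fix i :: 'a assume i: "i \<in> Basis"
    have "0 \<le> (v \<bullet> i - u \<bullet> i) * th i" using th01[OF i] assms(1)[OF i] by simp
    then show "u \<bullet> i \<le> x \<bullet> i" using xi[OF i] by simp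
    have "(v \<bullet> i - u \<bullet> i) * th i \<le> (v \<bullet> i - u \<bullet> i) * 1"
      using th01[OF i] assms(1)[OF i] by (intro mult_left_mono) auto
    then show "x \<bullet> i \<le> v \<bullet> i" using xi[OF i] by simp
  qed
  moreover have "z - x \<in> cbox p q"
    unfolding mem_box
  proof (intro ballI conjI)
    fix i :: 'a assume i: "i \<in> Basis"
    have den: "(v \<bullet> i - u \<bullet> i) + (q \<bullet> i - p \<bullet> i) > 0" using assms[OF i] by simp
    have e: "z \<bullet> i - u \<bullet> i - p \<bullet> i = ((v \<bullet> i - u \<bullet> i) + (q \<bullet> i - p \<bullet> i)) * th i"
      using den by (simp add: th_def)
    have zx: "(z - x) \<bullet> i = p \<bullet> i + (q \<bullet> i - p \<bullet> i) * th i"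
      using xi[OF i] e by (simp add: inner_diff_left algebra_simps)
    have "0 \<le> (q \<bullet> i - p \<bullet> i) * th i" using th01[OF i] assms(2)[OF i] by simp
    then show "p \<bullet> i \<le> (z - x) \<bullet> i" using zx by simp
    have "(q \<bullet> i - p \<bullet> i) * th i \<le> (q \<bullet> i - p \<bullet> i) * 1"
      using th01[OF i] assms(2)[OF i] by (intro mult_left_mono) auto
    then show "(z - x) \<bullet> i \<le> q \<bullet> i" using zx by simp
  qed
  ultimately show "z \<in> msum (cbox u v) (cbox p q)"
    unfolding msum_def by (intro CollectI exI[of _ x] exI[of _ "z - x"]) auto
qed

definition isbox :: "'a::euclidean_space set \<Rightarrow> bool" where
  "isbox K \<longleftrightarrow> (\<exists>u v. K = cbox u v \<and> (\<forall>i\<in>Basis. u \<bullet> i < v \<bullet> i))"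

lemma box_case:
  fixes K L :: "'a::euclidean_space set"
  assumes "isbox K" "isbox L"
  shows "measure lebesgue K powr (1 / DIM('a)) + measure lebesgue L powr (1 / DIM('a))
    \<le> measure lebesgue (msum K L) powr (1 / DIM('a))"
proof -
  obtain u v where K: "K = cbox u v" and uv: "\<And>i. i\<in>Basis \<Longrightarrow> u \<bullet> i < v \<bullet> i"
    using assms(1) unfolding isbox_def by blast
  obtain p q where L: "L = cbox p q" and pq: "\<And>i. i\<in>Basis \<Longrightarrow> p \<bullet> i < q \<bullet> i"
    using assms(2) unfolding isbox_def by blast
  have mK: "measure lebesgue K = (\<Prod>i\<in>Basis. v \<bullet> i - u \<bullet> i)"
    using uv by (simp add: K measure_lborel_cbox_eq less_imp_le inner_diff_left)
  have mL: "measure lebesgue L = (\<Prod>i\<in>Basis. q \<bullet> i - p \<bullet> i)"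
    using pq by (simp add: L measure_lborel_cbox_eq less_imp_le inner_diff_left)
  have mS: "measure lebesgue (cbox (u+p) (v+q)) = (\<Prod>i\<in>Basis. (v \<bullet> i - u \<bullet> i) + (q \<bullet> i - p \<bullet> i))"
  proof -
    have "\<forall>i\<in>Basis. (u+p) \<bullet> i \<le> (v+q) \<bullet> i"
    proof
      fix i :: 'a assume "i \<in> Basis"
      then show "(u+p) \<bullet> i \<le> (v+q) \<bullet> i" using uv[of i] pq[of i] by (simp add: inner_add_left)
    qed
    then show ?thesis by (simp add: measure_lborel_cbox_eq inner_diff_left inner_add_left algebra_simps)
  qed
  have "compact (msum K L)"
    unfolding msum_def K L by (intro compact_sums compact_cbox)
  then have "measure lebesgue (cbox (u+p) (v+q)) \<le> measure lebesgue (msum K L)"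
    using msum_cbox[OF uv pq] K L
    by (intro measure_mono_fmeasurable) (auto intro: lmeasurable_compact)
  moreover have "measure lebesgue K powr (1 / DIM('a)) + measure lebesgue L powr (1 / DIM('a))
     \<le> measure lebesgue (cbox (u+p) (v+q)) powr (1 / DIM('a))"
    unfolding mK mL mS using box_ineq[of Basis "\<lambda>i. v \<bullet> i - u \<bullet> i" "\<lambda>i. q \<bullet> i - p \<bullet> i"] uv pq
    by simp
  ultimately show ?thesis
    by (meson order_trans powr_mono2 zero_le_divide_1_iff of_nat_0_le_iff measure_nonneg)
qed

lemma box_sep:
  fixes u v p q :: "'a::euclidean_space"
  assumes "box u v \<inter> box p q = {}" "\<And>i. i\<in>Basis \<Longrightarrow> u \<bullet> i < v \<bullet> i"
     "\<And>i. i\<in>Basis \<Longrightarrow> p \<bullet> i < q \<bullet> i"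
  shows "\<exists>i\<in>Basis. v \<bullet> i \<le> p \<bullet> i \<or> q \<bullet> i \<le> u \<bullet> i"
proof (rule ccontr)
  assume "\<not> ?thesis"
  then have h: "\<And>i. i \<in> Basis \<Longrightarrow> p \<bullet> i < v \<bullet> i \<and> u \<bullet> i < q \<bullet> i" by force
  define z where "z = (\<Sum>i\<in>Basis. ((max (u \<bullet> i) (p \<bullet> i) + min (v \<bullet> i) (q \<bullet> i)) / 2) *\<^sub>R i)"
  have zi: "z \<bullet> i = (max (u \<bullet> i) (p \<bullet> i) + min (v \<bullet> i) (q \<bullet> i)) / 2" if "i \<in> Basis" for i
    using that by (simp add: z_def inner_sum_left inner_Basis if_distrib cong: if_cong)
  have "z \<in> box u v \<and> z \<in> box p q"
    unfolding mem_box
  proof (intro conjI ballI)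
    fix i :: 'a assume i: "i \<in> Basis"
    note * = zi[OF i] h[OF i] assms(2)[OF i] assms(3)[OF i]
    show "u \<bullet> i < z \<bullet> i" using * by (simp add: max_def min_def split: if_split_asm)
    show "z \<bullet> i < v \<bullet> i" using * by (simp add: max_def min_def split: if_split_asm)
    show "p \<bullet> i < z \<bullet> i" using * by (simp add: max_def min_def split: if_split_asm)
    show "z \<bullet> i < q \<bullet> i" using * by (simp add: max_def min_def split: if_split_asm)
  qed
  then show False using assms(1) by blast
qed

definition boxfam :: "'a::euclidean_space set set \<Rightarrow> bool" where
  "boxfam F \<longleftrightarrow> finite F \<and> F \<noteq> {} \<and> (\<forall>K\<in>F. isbox K) \<and>
     (\<forall>K\<in>F. \<forall>L\<in>F. K \<noteq> L \<longrightarrow> interior K \<inter> interior L = {})"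

lemma isbox_compact: "isbox K \<Longrightarrow> compact K"
  unfolding isbox_def by auto

lemma isbox_pos: "isbox K \<Longrightarrow> measure lebesgue K > 0"
  unfolding isbox_def by (auto simp: content_pos_lt_eq)

lemma boxfam_compact: "boxfam F \<Longrightarrow> compact (\<Union>F)"
  by (intro compact_Union) (auto simp: boxfam_def intro: isbox_compact)

lemma boxfam_pos: "boxfam F \<Longrightarrow> measure lebesgue (\<Union>F) > 0"
proof -
  assume F: "boxfam F"
  then have "F \<noteq> {}" "\<forall>K\<in>F. isbox K" by (auto simp: boxfam_def)
  then obtain K where K: "K \<in> F" "isbox K" by blast
  have "measure lebesgue K \<le> measure lebesgue (\<Union>F)"
  proof (rule measure_mono_fmeasurable)
    show "K \<in> sets lebesgue" using K(2) by (intro fmeasurableD lmeasurable_compact isbox_compact)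
    show "\<Union>F \<in> lmeasurable" using boxfam_compact[OF F] by (rule lmeasurable_compact)
  qed (use K in auto)
  then show ?thesis using isbox_pos[OF K(2)] by simp
qed

lemma measure_halves:
  fixes S :: "'a::euclidean_space set"
  assumes "S \<in> lmeasurable" "i \<in> Basis"
  shows "measure lebesgue (S \<inter> {x. x \<bullet> i \<ge> c}) + measure lebesgue (S \<inter> {x. x \<bullet> i \<le> c})
       = measure lebesgue S"
proof -
  have cl: "closed {x::'a. x \<bullet> i \<ge> c}" "closed {x::'a. x \<bullet> i \<le> c}"
    by (simp_all add: closed_halfspace_component_ge closed_halfspace_component_le)
  have m1: "S \<inter> {x. x \<bullet> i \<ge> c} \<in> lmeasurable" "S \<inter> {x. x \<bullet> i \<le> c} \<in> lmeasurable"
    using assms(1) cl by (auto intro!: fmeasurable_Int_fmeasurable borel_closed)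
  have "negligible ((S \<inter> {x. x \<bullet> i \<ge> c}) \<inter> (S \<inter> {x. x \<bullet> i \<le> c}))"
    by (rule negligible_subset[OF negligible_standard_hyperplane[OF assms(2), of c]]) auto
  then have "measure lebesgue ((S \<inter> {x. x \<bullet> i \<ge> c}) \<inter> (S \<inter> {x. x \<bullet> i \<le> c})) = 0"
    by (rule negligible_imp_measure0)
  moreover have Seq: "(S \<inter> {x. x \<bullet> i \<ge> c}) \<union> (S \<inter> {x. x \<bullet> i \<le> c}) = S" by auto
  ultimately show ?thesis
    using measure_Un3[OF m1] by (simp only: Seq)
qed

lemma split_fam:
  fixes F :: "'a::euclidean_space set set"
  assumes F: "boxfam F" and cb: "\<forall>K\<in>F. \<exists>u v. K \<inter> H = cbox u v"
  and Fh_def: "Fh = {S \<in> (\<lambda>K. K \<inter> H) ` F. measure lebesgue S > 0}"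
  shows "finite Fh" "card Fh \<le> card F" "\<And>S. S \<in> Fh \<Longrightarrow> isbox S"
    "\<And>S T. S \<in> Fh \<Longrightarrow> T \<in> Fh \<Longrightarrow> S \<noteq> T \<Longrightarrow> interior S \<inter> interior T = {}"
    "\<Union>Fh \<subseteq> \<Union>F \<inter> H" "measure lebesgue (\<Union>Fh) = measure lebesgue (\<Union>F \<inter> H)"
    "\<And>K. K \<in> F \<Longrightarrow> measure lebesgue (K \<inter> H) = 0 \<Longrightarrow> card Fh < card F"
proof -
  have fin: "finite F" using F by (simp add: boxfam_def)
  have sub: "Fh \<subseteq> (\<lambda>K. K \<inter> H) ` F" by (auto simp: Fh_def)
  show "finite Fh" using finite_subset[OF sub] fin by blast
  have "card Fh \<le> card ((\<lambda>K. K \<inter> H) ` F)" by (rule card_mono[OF finite_imageI[OF fin] sub])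
  also have "\<dots> \<le> card F" by (rule card_image_le[OF fin])
  finally show "card Fh \<le> card F" .
  show "isbox S" if S: "S \<in> Fh" for S
  proof -
    obtain K where K: "K \<in> F" "S = K \<inter> H" "measure lebesgue S > 0" using S unfolding Fh_def by blast
    obtain u v where uv: "K \<inter> H = cbox u v" using bspec[OF cb K(1)] by blast
    have "measure lebesgue (cbox u v) > 0" using K(2,3) uv by simp
    then have "\<forall>i\<in>Basis. u \<bullet> i < v \<bullet> i" by (simp add: content_pos_lt_eq)
    then show ?thesis unfolding isbox_def using K(2) uv by blast
  qed
  show "interior S \<inter> interior T = {}" if ST: "S \<in> Fh" "T \<in> Fh" "S \<noteq> T" for S T
  proof -
    obtain K where K: "K \<in> F" "S = K \<inter> H" using ST(1) unfolding Fh_def by blast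
    obtain L where L: "L \<in> F" "T = L \<inter> H" using ST(2) unfolding Fh_def by blast
    have "K \<noteq> L" using K(2) L(2) ST(3) by blast
    then have "interior K \<inter> interior L = {}" using F K(1) L(1) unfolding boxfam_def by blast
    moreover have "interior S \<subseteq> interior K" "interior T \<subseteq> interior L"
      using K(2) L(2) by (metis Int_lower1 interior_mono)+
    ultimately show ?thesis by blast
  qed
  show "\<Union>Fh \<subseteq> \<Union>F \<inter> H" by (auto simp: Fh_def)
  show "measure lebesgue (\<Union>Fh) = measure lebesgue (\<Union>F \<inter> H)"
  proof -
    define Z where "Z = {S \<in> (\<lambda>K. K \<inter> H) ` F. \<not> measure lebesgue S > 0}"
    have negZ: "negligible (\<Union>Z)"
    proof (rule negligible_Union)
      have "Z \<subseteq> (\<lambda>K. K \<inter> H) ` F" unfolding Z_def by blast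
      then show "finite Z" using finite_subset finite_imageI[OF fin] by blast
      fix S assume "S \<in> Z"
      then obtain K where K: "K \<in> F" "S = K \<inter> H" "\<not> measure lebesgue S > 0" unfolding Z_def by blast
      obtain u v where uv: "K \<inter> H = cbox u v" using bspec[OF cb K(1)] by blast
      have Sc: "S = cbox u v" using K(2) uv by simp
      have "measure lebesgue S = 0" using K(3) measure_nonneg[of lebesgue S] by linarith
      then show "negligible S" unfolding negligible_iff_measure Sc by simp
    qed
    have eq: "\<Union>F \<inter> H = \<Union>Fh \<union> \<Union>Z" by (auto simp: Fh_def Z_def)
    have "\<Union>Fh \<in> lmeasurable"
      using \<open>finite Fh\<close> \<open>\<And>S. S \<in> Fh \<Longrightarrow> isbox S\<close>
      by (intro lmeasurable_compact compact_Union) (auto intro: isbox_compact)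
    moreover have "negligible (\<Union>Fh - (\<Union>F \<inter> H) \<union> ((\<Union>F \<inter> H) - \<Union>Fh))"
      by (rule negligible_subset[OF negZ]) (unfold eq, blast)
    ultimately show ?thesis
      by (rule measure_negligible_symdiff[symmetric])
  qed
  show "card Fh < card F" if K: "K \<in> F" "measure lebesgue (K \<inter> H) = 0" for K
  proof -
    have "Fh \<subseteq> (\<lambda>K. K \<inter> H) ` (F - {K})"
    proof
      fix S assume "S \<in> Fh"
      then obtain K' where K': "K' \<in> F" "S = K' \<inter> H" "measure lebesgue S > 0" unfolding Fh_def by blast
      then have "K' \<noteq> K" using K(2) by auto
      then show "S \<in> (\<lambda>K. K \<inter> H) ` (F - {K})" using K'(1,2) by blast
    qed
    then have "card Fh \<le> card ((\<lambda>K. K \<inter> H) ` (F - {K}))"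
      by (rule card_mono[OF finite_imageI[OF finite_Diff[OF fin]]])
    also have "\<dots> \<le> card (F - {K})" by (rule card_image_le[OF finite_Diff[OF fin]])
    also have "\<dots> < card F" using fin K(1) by (rule card_Diff1_less)
    finally show ?thesis .
  qed
qed


lemma inner_sum_Basis_coord:
  fixes f :: "'a::euclidean_space \<Rightarrow> real"
  assumes "i \<in> Basis"
  shows "(\<Sum>j\<in>Basis. f j *\<^sub>R j) \<bullet> i = f i"
  using assms by (simp add: inner_sum_left inner_Basis if_distrib cong: if_cong)

lemma slab_bound:
  fixes l u :: "'a::euclidean_space"
  assumes i: "i \<in> Basis" and st: "s \<le> t" and lu: "\<And>j. j \<in> Basis \<Longrightarrow> l \<bullet> j \<le> u \<bullet> j"
  shows "measure lebesgue (cbox l u \<inter> {x. s \<le> x \<bullet> i \<and> x \<bullet> i \<le> t})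
         \<le> (t - s) * (\<Prod>j\<in>Basis - {i}. u \<bullet> j - l \<bullet> j)"
proof -
  define l' where "l' = (\<Sum>j\<in>Basis. (if j = i then max (l \<bullet> i) s else l \<bullet> j) *\<^sub>R j)"
  define u' where "u' = (\<Sum>j\<in>Basis. (if j = i then min (u \<bullet> i) t else u \<bullet> j) *\<^sub>R j)"
  have l'j: "l' \<bullet> j = (if j = i then max (l \<bullet> i) s else l \<bullet> j)" if "j \<in> Basis" for j
    unfolding l'_def using that by (rule inner_sum_Basis_coord)
  have u'j: "u' \<bullet> j = (if j = i then min (u \<bullet> i) t else u \<bullet> j)" if "j \<in> Basis" for j
    unfolding u'_def using that by (rule inner_sum_Basis_coord)
  have eq: "cbox l u \<inter> {x. s \<le> x \<bullet> i \<and> x \<bullet> i \<le> t} = cbox l' u'"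
  proof (intro set_eqI iffI)
    fix x assume "x \<in> cbox l u \<inter> {x. s \<le> x \<bullet> i \<and> x \<bullet> i \<le> t}"
    then show "x \<in> cbox l' u'" using i by (auto simp: l'j u'j mem_box)
  next
    fix x assume x: "x \<in> cbox l' u'"
    have "l \<bullet> j \<le> x \<bullet> j \<and> x \<bullet> j \<le> u \<bullet> j" if "j \<in> Basis" for j
      using x that unfolding mem_box by (auto simp: l'j u'j split: if_splits)
    moreover have "s \<le> x \<bullet> i \<and> x \<bullet> i \<le> t" using x i unfolding mem_box
      by (metis l'j u'j max.bounded_iff min.bounded_iff)
    ultimately show "x \<in> cbox l u \<inter> {x. s \<le> x \<bullet> i \<and> x \<bullet> i \<le> t}"
      by (auto simp: mem_box)
  qed
  have nn: "0 \<le> (\<Prod>j\<in>Basis - {i}. u \<bullet> j - l \<bullet> j)"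
    using lu by (intro prod_nonneg) auto
  show ?thesis
  proof (cases "\<forall>j\<in>Basis. l' \<bullet> j \<le> u' \<bullet> j")
    case True
    have "measure lebesgue (cbox l' u') = (\<Prod>j\<in>Basis. u' \<bullet> j - l' \<bullet> j)"
      using True by (simp add: measure_lborel_cbox_eq inner_diff_left)
    also have "\<dots> = (u' \<bullet> i - l' \<bullet> i) * (\<Prod>j\<in>Basis - {i}. u' \<bullet> j - l' \<bullet> j)"
      using i by (simp add: prod.remove)
    also have "\<dots> = (u' \<bullet> i - l' \<bullet> i) * (\<Prod>j\<in>Basis - {i}. u \<bullet> j - l \<bullet> j)"
      by (intro arg_cong2[where f="(*)"] prod.cong) (auto simp: l'j u'j)
    also have "\<dots> \<le> (t - s) * (\<Prod>j\<in>Basis - {i}. u \<bullet> j - l \<bullet> j)"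
      using nn i by (intro mult_right_mono) (auto simp: l'j u'j)
    finally show ?thesis using eq by simp
  next
    case False
    then have "measure lebesgue (cbox l' u') = 0" by (auto simp: measure_lborel_cbox_eq)
    then show ?thesis using eq nn st by simp
  qed
qed

lemma halfspace_ivt:
  fixes S :: "'a::euclidean_space set"
  assumes S: "compact S" and i: "i \<in> Basis" and y: "0 \<le> y" "y \<le> measure lebesgue S"
  shows "\<exists>c. measure lebesgue (S \<inter> {x. x \<bullet> i \<ge> c}) = y"
proof (cases "S = {}")
  case True
  then show ?thesis using y by simp
next
  case Sne: False
  define g where "g c = measure lebesgue (S \<inter> {x. x \<bullet> i \<ge> c})" for c
  obtain a where a: "S \<subseteq> cbox (-a) a"
    using bounded_subset_cbox_symmetric[OF compact_imp_bounded[OF S]] by blast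
  define L where "L = (\<Prod>j\<in>Basis - {i}. a \<bullet> j - (-a) \<bullet> j)"
  have cl: "\<And>c. closed {x::'a. x \<bullet> i \<ge> c}" "\<And>c. closed {x::'a. s \<le> x \<bullet> i \<and> x \<bullet> i \<le> c}" for s
    by (simp_all add: closed_halfspace_component_ge closed_Collect_conj closed_halfspace_component_le)
  have Sm: "S \<in> lmeasurable" using S by (rule lmeasurable_compact)
  have mS: "\<And>c. S \<inter> {x. x \<bullet> i \<ge> c} \<in> lmeasurable"
    using Sm cl by (auto intro!: fmeasurable_Int_fmeasurable borel_closed)
  have mslab: "\<And>s c. S \<inter> {x. s \<le> x \<bullet> i \<and> x \<bullet> i \<le> c} \<in> lmeasurable"
    using Sm cl by (auto intro!: fmeasurable_Int_fmeasurable borel_closed)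
  have aa: "\<And>j. j \<in> Basis \<Longrightarrow> (-a) \<bullet> j \<le> a \<bullet> j"
  proof -
    fix j :: 'a assume j: "j \<in> Basis"
    obtain z where "z \<in> S" using Sne by blast
    then have "z \<in> cbox (-a) a" using a by blast
    then have "(-a) \<bullet> j \<le> z \<bullet> j" "z \<bullet> j \<le> a \<bullet> j" using j mem_box(2) by blast+
    then show "(-a) \<bullet> j \<le> a \<bullet> j" by linarith
  qed
  have lip: "g s - g t \<le> (t - s) * L" "g t \<le> g s" if st: "s \<le> t" for s t
  proof -
    have "S \<inter> {x. x \<bullet> i \<ge> s} \<subseteq> (S \<inter> {x. x \<bullet> i \<ge> t}) \<union> (S \<inter> {x. s \<le> x \<bullet> i \<and> x \<bullet> i \<le> t})"
      by auto
    then have "g s \<le> measure lebesgue ((S \<inter> {x. x \<bullet> i \<ge> t}) \<union> (S \<inter> {x. s \<le> x \<bullet> i \<and> x \<bullet> i \<le> t}))"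
      unfolding g_def by (intro measure_mono_fmeasurable) (auto intro!: fmeasurableD mS mslab)
    also have "\<dots> \<le> g t + measure lebesgue (S \<inter> {x. s \<le> x \<bullet> i \<and> x \<bullet> i \<le> t})"
      unfolding g_def by (rule measure_Un_le) (auto intro!: fmeasurableD mS mslab)
    also have "measure lebesgue (S \<inter> {x. s \<le> x \<bullet> i \<and> x \<bullet> i \<le> t})
       \<le> measure lebesgue (cbox (-a) a \<inter> {x. s \<le> x \<bullet> i \<and> x \<bullet> i \<le> t})"
    proof (rule measure_mono_fmeasurable[OF _ fmeasurableD[OF mslab]])
      show "cbox (-a) a \<inter> {x. s \<le> x \<bullet> i \<and> x \<bullet> i \<le> t} \<in> lmeasurable"
        using cl by (auto intro!: fmeasurable_Int_fmeasurable borel_closed)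
    qed (use a in auto)
    also have "\<dots> \<le> (t - s) * L" unfolding L_def by (rule slab_bound[OF i st aa])
    finally show "g s - g t \<le> (t - s) * L" by simp
    show "g t \<le> g s" unfolding g_def using st
      by (intro measure_mono_fmeasurable) (auto intro!: fmeasurableD mS)
  qed
  have Lnn: "L \<ge> 0" unfolding L_def using aa by (intro prod_nonneg) auto
  have cont: "continuous_on UNIV g"
    unfolding continuous_on_iff
  proof (intro ballI allI impI)
    fix x e :: real assume e: "e > 0"
    show "\<exists>d>0. \<forall>x'\<in>UNIV. dist x' x < d \<longrightarrow> dist (g x') (g x) < e"
    proof (intro exI[of _ "e / (L + 1)"] conjI ballI impI)
      show "e / (L + 1) > 0" using e Lnn by simp
      fix x' assume d: "dist x' x < e / (L + 1)"
      have "\<bar>g x' - g x\<bar> \<le> \<bar>x' - x\<bar> * L"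
      proof (cases "x' \<le> x")
        case True then show ?thesis using lip[OF True] by (simp add: abs_if)
      next
        case False then show ?thesis using lip[of x x'] by (simp add: abs_if)
      qed
      also have "\<dots> \<le> \<bar>x' - x\<bar> * (L + 1)" using Lnn by (intro mult_left_mono) auto
      also have "\<dots> < e" using d Lnn by (simp add: dist_real_def pos_less_divide_eq add_nonneg_pos)
      finally show "dist (g x') (g x) < e" by (simp add: dist_real_def)
    qed
  qed
  have ab: "\<forall>z\<in>S. (-a) \<bullet> i \<le> z \<bullet> i \<and> z \<bullet> i \<le> a \<bullet> i" using a i mem_box(2) by blast
  define lo where "lo = (-a) \<bullet> i - 1"
  define hi where "hi = a \<bullet> i + 1"
  have glo: "g lo = measure lebesgue S"
  proof -
    have "S \<inter> {x. x \<bullet> i \<ge> lo} = S" using ab unfolding lo_def by force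
    then show ?thesis by (simp add: g_def)
  qed
  have ghi: "g hi = 0"
  proof -
    have "S \<inter> {x. x \<bullet> i \<ge> hi} = {}" using ab unfolding hi_def by force
    then show ?thesis by (simp add: g_def)
  qed
  have "lo \<le> hi" using aa[OF i] by (simp add: lo_def hi_def)
  then obtain c where "g c = y"
    using IVT2'[of g hi y lo] y glo ghi continuous_on_subset[OF cont] by auto
  then show ?thesis unfolding g_def by blast
qed


definition BM :: "'a::euclidean_space set \<Rightarrow> 'a set \<Rightarrow> bool" where
  "BM A B \<longleftrightarrow> measure lebesgue A powr (1 / DIM('a)) + measure lebesgue B powr (1 / DIM('a))
     \<le> measure lebesgue (msum A B) powr (1 / DIM('a))"

lemma msum_commute: "msum A B = msum B A"
  unfolding msum_def by (metis (no_types, lifting) add.commute)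

lemma BM_commute: "BM A B \<Longrightarrow> BM B A"
  unfolding BM_def by (simp add: msum_commute add.commute)

lemma pow_le_from_root:
  fixes X y d :: real
  assumes "0 \<le> X" "0 \<le> y" "d > 0" "X \<le> y powr (1/d)"
  shows "X powr d \<le> y"
proof -
  have "X powr d \<le> (y powr (1/d)) powr d" using assms by (intro powr_mono2) auto
  also have "\<dots> = y" using assms by (simp add: powr_powr)
  finally show ?thesis .
qed

lemma root_le_from_pow:
  fixes X y d :: real
  assumes "0 \<le> X" "0 \<le> y" "d > 0" "X powr d \<le> y"
  shows "X \<le> y powr (1/d)"
proof -
  have "X = (X powr d) powr (1/d)" using assms by (simp add: powr_powr)
  also have "\<dots> \<le> y powr (1/d)" using assms by (intro powr_mono2) auto
  finally show ?thesis .
qed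

lemma scale_pow:
  fixes l X d :: real
  assumes "0 < l" "0 \<le> X" "d > 0"
  shows "(l powr (1/d) * X) powr d = l * X powr d"
  using assms by (simp add: powr_mult powr_powr)

lemma sep_pair:
  fixes F :: "'a::euclidean_space set set"
  assumes F: "boxfam F" and c2: "card F \<ge> 2"
  shows "\<exists>i\<in>Basis. \<exists>c K1 K2. K1 \<in> F \<and> K2 \<in> F \<and> isbox K1 \<and> isbox K2 \<and>
            K1 \<subseteq> {x. x \<bullet> i \<le> c} \<and> K2 \<subseteq> {x. x \<bullet> i \<ge> c}"
proof -
  obtain K L where KL: "K \<in> F" "L \<in> F" "K \<noteq> L"
  proof -
    have "\<not> (\<forall>K\<in>F. \<forall>L\<in>F. K = L)"
    proof
      assume "\<forall>K\<in>F. \<forall>L\<in>F. K = L"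
      then have "card F \<le> 1" by (simp add: card_le_Suc0_iff_eq F[unfolded boxfam_def])
      then show False using c2 by simp
    qed
    then show thesis using that by blast
  qed
  have bK: "isbox K" and bL: "isbox L" and dis: "interior K \<inter> interior L = {}"
    using F KL by (auto simp: boxfam_def)
  obtain u v where K: "K = cbox u v" and uv: "\<And>i. i\<in>Basis \<Longrightarrow> u \<bullet> i < v \<bullet> i"
    using bK unfolding isbox_def by blast
  obtain p q where L: "L = cbox p q" and pq: "\<And>i. i\<in>Basis \<Longrightarrow> p \<bullet> i < q \<bullet> i"
    using bL unfolding isbox_def by blast
  have "box u v \<inter> box p q = {}" using dis K L by simp
  then obtain i where i: "i \<in> Basis" "v \<bullet> i \<le> p \<bullet> i \<or> q \<bullet> i \<le> u \<bullet> i"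
    using box_sep[OF _ uv pq] by blast
  show ?thesis
  proof (cases "v \<bullet> i \<le> p \<bullet> i")
    case True
    have "K \<subseteq> {x. x \<bullet> i \<le> v \<bullet> i}" "L \<subseteq> {x. x \<bullet> i \<ge> v \<bullet> i}"
      using K L i True by (auto simp: mem_box, fastforce)
    then show ?thesis using i KL bK bL by blast
  next
    case False
    then have "q \<bullet> i \<le> u \<bullet> i" using i by auto
    then have "L \<subseteq> {x. x \<bullet> i \<le> q \<bullet> i}" "K \<subseteq> {x. x \<bullet> i \<ge> q \<bullet> i}"
      using K L i by (auto simp: mem_box, fastforce)
    then show ?thesis using i KL bK bL by blast
  qed
qed


lemma boxfam_isbox: "boxfam F \<Longrightarrow> K \<in> F \<Longrightarrow> isbox K"
  by (simp add: boxfam_def)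

lemma bm_step:
  fixes F G :: "'a::euclidean_space set set"
  assumes IH: "\<And>F' G' :: 'a set set. card F' + card G' < card F + card G \<Longrightarrow> boxfam F' \<Longrightarrow> boxfam G' \<Longrightarrow> BM (\<Union>F') (\<Union>G')"
    and F: "boxfam F" and G: "boxfam G" and c2: "card F \<ge> 2"
  shows "BM (\<Union>F) (\<Union>G)"
proof -
  obtain i c K1 K2 where i: "i \<in> Basis" and K: "K1 \<in> F" "K2 \<in> F" "isbox K1" "isbox K2"
      "K1 \<subseteq> {x. x \<bullet> i \<le> c}" "K2 \<subseteq> {x. x \<bullet> i \<ge> c}"
    using sep_pair[OF F c2] by blast
  define d where "d = real DIM('a)"
  have d: "d > 0" by (simp add: d_def)
  define e where "e = 1 / d"
  have cbu: "\<exists>u v. K \<inter> {x. x \<bullet> i \<ge> t} = cbox u v" "\<exists>u v. K \<inter> {x. x \<bullet> i \<le> t} = cbox u v"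
    if "K \<in> F \<or> K \<in> G" for K t
  proof -
    have "isbox K" using that boxfam_isbox[OF F] boxfam_isbox[OF G] by blast
    then obtain u v where uv: "K = cbox u v" unfolding isbox_def by blast
    show "\<exists>u v. K \<inter> {x. x \<bullet> i \<ge> t} = cbox u v" unfolding uv interval_split[OF i] by blast
    show "\<exists>u v. K \<inter> {x. x \<bullet> i \<le> t} = cbox u v" unfolding uv interval_split[OF i] by blast
  qed
  define Fu where "Fu = {S \<in> (\<lambda>K. K \<inter> {x. x \<bullet> i \<ge> c}) ` F. measure lebesgue S > 0}"
  define Fd where "Fd = {S \<in> (\<lambda>K. K \<inter> {x. x \<bullet> i \<le> c}) ` F. measure lebesgue S > 0}"
  have cbFu: "\<forall>K\<in>F. \<exists>u v. K \<inter> {x. x \<bullet> i \<ge> c} = cbox u v" using cbu by blast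
  have cbFd: "\<forall>K\<in>F. \<exists>u v. K \<inter> {x. x \<bullet> i \<le> c} = cbox u v" using cbu by blast
  note su = split_fam[OF F cbFu Fu_def]
  note sd = split_fam[OF F cbFd Fd_def]
  have z1: "measure lebesgue (K1 \<inter> {x. x \<bullet> i \<ge> c}) = 0"
  proof -
    have "negligible (K1 \<inter> {x. x \<bullet> i \<ge> c})"
      by (rule negligible_subset[OF negligible_standard_hyperplane[OF i, of c]]) (use K in auto)
    then show ?thesis by (rule negligible_imp_measure0)
  qed
  have z2: "measure lebesgue (K2 \<inter> {x. x \<bullet> i \<le> c}) = 0"
  proof -
    have "negligible (K2 \<inter> {x. x \<bullet> i \<le> c})"
      by (rule negligible_subset[OF negligible_standard_hyperplane[OF i, of c]]) (use K in auto)
    then show ?thesis by (rule negligible_imp_measure0)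
  qed
  have cFu: "card Fu < card F" using su(7) K(1) z1 by blast
  have cFd: "card Fd < card F" using sd(7) K(2) z2 by blast
  have "K2 \<in> Fu"
  proof -
    have "K2 = K2 \<inter> {x. x \<bullet> i \<ge> c}" using K by auto
    then have "K2 \<in> (\<lambda>K. K \<inter> {x. x \<bullet> i \<ge> c}) ` F" using K(2) by (metis image_eqI)
    then show ?thesis using isbox_pos[OF K(4)] by (simp add: Fu_def)
  qed
  then have bFu: "boxfam Fu" using su unfolding boxfam_def by blast
  have "K1 \<in> Fd"
  proof -
    have "K1 = K1 \<inter> {x. x \<bullet> i \<le> c}" using K by auto
    then have "K1 \<in> (\<lambda>K. K \<inter> {x. x \<bullet> i \<le> c}) ` F" using K(1) by (metis image_eqI)
    then show ?thesis using isbox_pos[OF K(3)] by (simp add: Fd_def)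
  qed
  then have bFd: "boxfam Fd" using sd unfolding boxfam_def by blast
  define a where "a = measure lebesgue (\<Union>F)"
  define b where "b = measure lebesgue (\<Union>G)"
  have a0: "a > 0" unfolding a_def by (rule boxfam_pos[OF F])
  have b0: "b > 0" unfolding b_def by (rule boxfam_pos[OF G])
  have aUD: "measure lebesgue (\<Union>Fu) + measure lebesgue (\<Union>Fd) = a"
    unfolding su(6) sd(6) a_def by (rule measure_halves[OF lmeasurable_compact[OF boxfam_compact[OF F]] i])
  have aU0: "measure lebesgue (\<Union>Fu) > 0" by (rule boxfam_pos[OF bFu])
  have aD0: "measure lebesgue (\<Union>Fd) > 0" by (rule boxfam_pos[OF bFd])
  define lam where "lam = measure lebesgue (\<Union>Fu) / a"
  have lam: "0 < lam" "lam < 1" using aU0 aD0 aUD a0 by (auto simp: lam_def divide_simps)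
  have aU: "measure lebesgue (\<Union>Fu) = lam * a" using a0 by (simp add: lam_def)
  have aD: "measure lebesgue (\<Union>Fd) = (1 - lam) * a" using aU aUD by (simp add: algebra_simps)
  obtain c' where c': "measure lebesgue (\<Union>G \<inter> {x. x \<bullet> i \<ge> c'}) = lam * b"
    using halfspace_ivt[OF boxfam_compact[OF G] i, of "lam * b"] lam b0 by (auto simp: b_def)
  define Gu where "Gu = {S \<in> (\<lambda>K. K \<inter> {x. x \<bullet> i \<ge> c'}) ` G. measure lebesgue S > 0}"
  define Gd where "Gd = {S \<in> (\<lambda>K. K \<inter> {x. x \<bullet> i \<le> c'}) ` G. measure lebesgue S > 0}"
  have cbGu: "\<forall>K\<in>G. \<exists>u v. K \<inter> {x. x \<bullet> i \<ge> c'} = cbox u v" using cbu by blast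
  have cbGd: "\<forall>K\<in>G. \<exists>u v. K \<inter> {x. x \<bullet> i \<le> c'} = cbox u v" using cbu by blast
  note gu = split_fam[OF G cbGu Gu_def]
  note gd = split_fam[OF G cbGd Gd_def]
  have bU: "measure lebesgue (\<Union>Gu) = lam * b" using gu(6) c' by simp
  have bD: "measure lebesgue (\<Union>Gd) = (1 - lam) * b"
    using measure_halves[OF lmeasurable_compact[OF boxfam_compact[OF G]] i, of c'] gu(6) gd(6) c' bU
    by (simp add: b_def algebra_simps)
  have "Gu \<noteq> {}" using bU lam b0 by auto
  then have bGu: "boxfam Gu" using gu unfolding boxfam_def by blast
  have "Gd \<noteq> {}" using bD lam b0 by auto
  then have bGd: "boxfam Gd" using gd unfolding boxfam_def by blast
  have "card Fu + card Gu < card F + card G" using cFu gu(2) by linarith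
  then have IHu: "BM (\<Union>Fu) (\<Union>Gu)" using IH bFu bGu by blast
  have "card Fd + card Gd < card F + card G" using cFd gd(2) by linarith
  then have IHd: "BM (\<Union>Fd) (\<Union>Gd)" using IH bFd bGd by blast
  define S where "S = msum (\<Union>F) (\<Union>G)"
  have Sc: "compact S" unfolding S_def msum_def
    by (intro compact_sums boxfam_compact F G)
  have Sm: "S \<in> lmeasurable" using Sc by (rule lmeasurable_compact)
  have mU: "measure lebesgue (msum (\<Union>Fu) (\<Union>Gu)) \<le> measure lebesgue (S \<inter> {x. x \<bullet> i \<ge> c + c'})"
  proof (rule measure_mono_fmeasurable)
    show "msum (\<Union>Fu) (\<Union>Gu) \<subseteq> S \<inter> {x. x \<bullet> i \<ge> c + c'}"
      using su(5) gu(5) unfolding S_def msum_def by (fastforce simp: inner_add_left intro: add_mono)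
    show "msum (\<Union>Fu) (\<Union>Gu) \<in> sets lebesgue" unfolding msum_def
      by (intro fmeasurableD lmeasurable_compact compact_sums boxfam_compact bFu bGu)
    show "S \<inter> {x. x \<bullet> i \<ge> c + c'} \<in> lmeasurable"
      using Sm by (auto intro!: fmeasurable_Int_fmeasurable borel_closed closed_halfspace_component_ge)
  qed
  have mD: "measure lebesgue (msum (\<Union>Fd) (\<Union>Gd)) \<le> measure lebesgue (S \<inter> {x. x \<bullet> i \<le> c + c'})"
  proof (rule measure_mono_fmeasurable)
    show "msum (\<Union>Fd) (\<Union>Gd) \<subseteq> S \<inter> {x. x \<bullet> i \<le> c + c'}"
      using sd(5) gd(5) unfolding S_def msum_def by (fastforce simp: inner_add_left intro: add_mono)
    show "msum (\<Union>Fd) (\<Union>Gd) \<in> sets lebesgue" unfolding msum_def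
      by (intro fmeasurableD lmeasurable_compact compact_sums boxfam_compact bFd bGd)
    show "S \<inter> {x. x \<bullet> i \<le> c + c'} \<in> lmeasurable"
      using Sm by (auto intro!: fmeasurable_Int_fmeasurable borel_closed closed_halfspace_component_le)
  qed
  have mS: "measure lebesgue (S \<inter> {x. x \<bullet> i \<ge> c + c'}) + measure lebesgue (S \<inter> {x. x \<bullet> i \<le> c + c'})
      = measure lebesgue S" by (rule measure_halves[OF Sm i])
  define X where "X = a powr e + b powr e"
  have X0: "X \<ge> 0" by (simp add: X_def)
  have pm: "(l * z) powr e = l powr e * z powr e" if "l \<ge> 0" "z \<ge> 0" for l z :: real
    using that by (simp add: powr_mult)
  have upX: "lam * X powr d \<le> measure lebesgue (msum (\<Union>Fu) (\<Union>Gu))"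
  proof -
    have "lam powr e * X \<le> measure lebesgue (msum (\<Union>Fu) (\<Union>Gu)) powr e"
      using IHu lam a0 b0 unfolding BM_def aU bU e_def d_def X_def
      by (simp add: pm[unfolded e_def d_def] distrib_left less_imp_le)
    then have "(lam powr e * X) powr d \<le> measure lebesgue (msum (\<Union>Fu) (\<Union>Gu))"
      using X0 d by (intro pow_le_from_root) (auto simp: e_def)
    then show ?thesis using scale_pow[OF lam(1) X0 d] by (simp add: e_def)
  qed
  have dnX: "(1 - lam) * X powr d \<le> measure lebesgue (msum (\<Union>Fd) (\<Union>Gd))"
  proof -
    have "(1 - lam) powr e * X \<le> measure lebesgue (msum (\<Union>Fd) (\<Union>Gd)) powr e"
      using IHd lam a0 b0 unfolding BM_def aD bD e_def d_def X_def
      by (simp add: pm[unfolded e_def d_def] distrib_left less_imp_le)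
    then have "((1 - lam) powr e * X) powr d \<le> measure lebesgue (msum (\<Union>Fd) (\<Union>Gd))"
      using X0 d by (intro pow_le_from_root) (auto simp: e_def)
    moreover have "0 < 1 - lam" using lam by simp
    ultimately show ?thesis using scale_pow[of "1 - lam" X d] X0 d by (simp add: e_def)
  qed
  have "X powr d \<le> measure lebesgue S"
    using upX dnX mU mD mS by (simp add: algebra_simps)
  then have "X \<le> measure lebesgue S powr (1/d)"
    using X0 d by (intro root_le_from_pow) auto
  then show ?thesis unfolding BM_def X_def S_def a_def b_def e_def d_def by simp
qed

lemma bm_boxes:
  fixes F G :: "'a::euclidean_space set set"
  shows "boxfam F \<Longrightarrow> boxfam G \<Longrightarrow> BM (\<Union>F) (\<Union>G)"
proof (induction "card F + card G" arbitrary: F G rule: less_induct)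
  case less
  have cF: "card F \<ge> 1" and cG: "card G \<ge> 1"
    using less.prems by (auto simp: boxfam_def Suc_le_eq card_gt_0_iff)
  show ?case
  proof (cases "card F \<ge> 2")
    case True
    show ?thesis by (rule bm_step[OF _ less.prems True]) (rule less.hyps, auto)
  next
    case nF: False
    show ?thesis
    proof (cases "card G \<ge> 2")
      case True
      have "BM (\<Union>G) (\<Union>F)"
        by (rule bm_step[OF _ less.prems(2,1) True]) (rule less.hyps, auto)
      then show ?thesis by (rule BM_commute)
    next
      case False
      then have "card F = 1" "card G = 1" using nF cF cG by auto
      then obtain K L where "F = {K}" "G = {L}" by (auto simp: card_Suc_eq)
      then show ?thesis using less.prems box_case[of K L] unfolding BM_def boxfam_def by auto
    qed
  qed
qed


lemma grid_cover:
  fixes K :: "'a::euclidean_space set"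
  assumes K: "compact K" "K \<noteq> {}" and dl: "\<delta> > 0"
  shows "\<exists>F. boxfam F \<and> K \<subseteq> \<Union>F \<and> (\<forall>y\<in>\<Union>F. \<exists>x\<in>K. dist x y \<le> \<delta>)"
proof -
  define h where "h = \<delta> / DIM('a)"
  have h: "h > 0" using dl by (simp add: h_def)
  obtain R where R: "\<forall>x\<in>K. norm x \<le> R" using compact_imp_bounded[OF K(1)] bounded_iff by blast
  define N :: int where "N = \<lceil>R / h\<rceil> + 1"
  define cube where "cube z = cbox (\<Sum>i\<in>Basis. (h * of_int (z i)) *\<^sub>R i) (\<Sum>i\<in>Basis. (h * (of_int (z i) + 1)) *\<^sub>R i)"
    for z :: "'a \<Rightarrow> int"
  have cube_mem: "y \<in> cube z \<longleftrightarrow> (\<forall>i\<in>Basis. h * of_int (z i) \<le> y \<bullet> i \<and> y \<bullet> i \<le> h * (of_int (z i) + 1))"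
    for y z by (simp add: cube_def mem_box inner_sum_Basis_coord)
  have cube_int: "interior (cube z) = {y. \<forall>i\<in>Basis. h * of_int (z i) < y \<bullet> i \<and> y \<bullet> i < h * (of_int (z i) + 1)}"
    for z by (auto simp: cube_def interior_cbox mem_box inner_sum_Basis_coord)
  define Z :: "('a \<Rightarrow> int) set" where "Z = PiE Basis (\<lambda>_. {-N..N})"
  define F where "F = {C \<in> cube ` Z. C \<inter> K \<noteq> {}}"
  have finZ: "finite Z" unfolding Z_def by (intro finite_PiE) auto
  have finF: "finite F" unfolding F_def using finZ by simp
  have boxc: "isbox (cube z)" for z
    unfolding isbox_def cube_def
    by (rule exI, rule exI, rule conjI[OF refl]) (use h in \<open>simp add: inner_sum_Basis_coord\<close>)
  have disj: "interior (cube z) \<inter> interior (cube z') = {}" if "z \<in> Z" "z' \<in> Z" "cube z \<noteq> cube z'" for z z'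
  proof (rule ccontr)
    assume "interior (cube z) \<inter> interior (cube z') \<noteq> {}"
    then obtain y where y: "y \<in> interior (cube z)" "y \<in> interior (cube z')" by blast
    have "z i = z' i" if i: "i \<in> Basis" for i
    proof -
      have a: "h * of_int (z i) < y \<bullet> i" "y \<bullet> i < h * (of_int (z i) + 1)"
        "h * of_int (z' i) < y \<bullet> i" "y \<bullet> i < h * (of_int (z' i) + 1)"
        using y i unfolding cube_int by auto
      have "of_int (z' i) < (of_int (z i) + 1 :: real)"
        using a(3,2) h by (meson less_trans mult_less_cancel_left_pos)
      moreover have "of_int (z i) < (of_int (z' i) + 1 :: real)"
        using a(1,4) h by (meson less_trans mult_less_cancel_left_pos)
      ultimately show ?thesis by linarith
    qed
    then have "z = z'" using that(1,2) unfolding Z_def by (metis PiE_ext)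
    then show False using that(3) by simp
  qed
  have cover: "K \<subseteq> \<Union>F"
  proof
    fix x assume x: "x \<in> K"
    define zx where "zx = restrict (\<lambda>i. \<lfloor>x \<bullet> i / h\<rfloor>) Basis"
    have "zx \<in> Z" unfolding Z_def
    proof (rule PiE_I)
      fix i :: 'a assume i: "i \<in> Basis"
      have xi: "\<bar>x \<bullet> i\<bar> \<le> R" using R x i by (meson norm_bound_Basis_le)
      have "x \<bullet> i / h \<le> R / h" using xi h by (simp add: divide_right_mono)
      then have u: "\<lfloor>x \<bullet> i / h\<rfloor> \<le> N" unfolding N_def by linarith
      have "- R \<le> x \<bullet> i" using xi by linarith
      then have "- R / h \<le> x \<bullet> i / h" using h by (metis divide_right_mono less_imp_le)
      then have l: "- N \<le> \<lfloor>x \<bullet> i / h\<rfloor>" unfolding N_def by linarith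
      show "zx i \<in> {-N..N}" using u l i by (simp add: zx_def)
    next
      fix i :: 'a assume "i \<notin> Basis" then show "zx i = undefined" by (simp add: zx_def)
    qed
    moreover have "x \<in> cube zx" unfolding cube_mem
    proof
      fix i :: 'a assume i: "i \<in> Basis"
      have f1: "of_int \<lfloor>x \<bullet> i / h\<rfloor> \<le> x \<bullet> i / h" by (rule of_int_floor_le)
      have f2: "x \<bullet> i / h < of_int \<lfloor>x \<bullet> i / h\<rfloor> + 1" by (rule real_of_int_floor_add_one_gt)
      have "h * of_int \<lfloor>x \<bullet> i / h\<rfloor> \<le> h * (x \<bullet> i / h)" using mult_left_mono[OF f1, of h] h by simp
      then have "h * of_int \<lfloor>x \<bullet> i / h\<rfloor> \<le> x \<bullet> i" using h by simp
      moreover have "h * (x \<bullet> i / h) \<le> h * (of_int \<lfloor>x \<bullet> i / h\<rfloor> + 1)"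
        using mult_left_mono[OF less_imp_le[OF f2], of h] h by simp
      then have "x \<bullet> i \<le> h * (of_int \<lfloor>x \<bullet> i / h\<rfloor> + 1)" using h by simp
      ultimately show "h * of_int (zx i) \<le> x \<bullet> i \<and> x \<bullet> i \<le> h * (of_int (zx i) + 1)"
        using i by (simp add: zx_def)
    qed
    ultimately show "x \<in> \<Union>F" using x unfolding F_def by blast
  qed
  have "boxfam F"
    unfolding boxfam_def
  proof (intro conjI ballI impI)
    show "finite F" by (rule finF)
    show "F \<noteq> {}" using cover K(2) by blast
    show "isbox C" if "C \<in> F" for C using that boxc unfolding F_def by blast
    show "interior C \<inter> interior C' = {}" if "C \<in> F" "C' \<in> F" "C \<noteq> C'" for C C'
      using that disj unfolding F_def by blast
  qed
  moreover have "\<forall>y\<in>\<Union>F. \<exists>x\<in>K. dist x y \<le> \<delta>"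
  proof
    fix y assume "y \<in> \<Union>F"
    then obtain z x where yz: "y \<in> cube z" and xz: "x \<in> cube z" and xK: "x \<in> K"
      unfolding F_def by blast
    have "dist x y = norm (x - y)" by (simp add: dist_norm)
    also have "\<dots> \<le> (\<Sum>i\<in>Basis. \<bar>(x - y) \<bullet> i\<bar>)" by (rule norm_le_l1)
    also have "\<dots> \<le> (\<Sum>i\<in>(Basis::'a set). h)"
    proof (rule sum_mono)
      fix i :: 'a assume i: "i \<in> Basis"
      have "h * of_int (z i) \<le> y \<bullet> i \<and> y \<bullet> i \<le> h * (of_int (z i) + 1)"
        "h * of_int (z i) \<le> x \<bullet> i \<and> x \<bullet> i \<le> h * (of_int (z i) + 1)"
        using yz xz i unfolding cube_mem by auto
      then show "\<bar>(x - y) \<bullet> i\<bar> \<le> h" by (simp add: inner_diff_left algebra_simps abs_le_iff)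
    qed
    also have "\<dots> = \<delta>" by (simp add: h_def)
    finally show "\<exists>x\<in>K. dist x y \<le> \<delta>" using xK by blast
  qed
  ultimately show ?thesis using cover by blast
qed


lemma bm_compact:
  fixes A B :: "'a::euclidean_space set"
  assumes A: "compact A" "A \<noteq> {}" and B: "compact B" "B \<noteq> {}"
  shows "BM A B"
proof -
  define d where "d = real DIM('a)"
  have d: "d > 0" by (simp add: d_def)
  define e where "e = 1 / d"
  have e: "e \<ge> 0" using d by (simp add: e_def)
  define S where "S = msum A B"
  have Sc: "compact S" unfolding S_def msum_def using A B by (intro compact_sums) auto
  define T where "T r = msum S (cball 0 r)" for r :: real
  have Tc: "compact (T r)" for r unfolding T_def msum_def using Sc by (intro compact_sums) auto
  have Tm: "T r \<in> lmeasurable" for r using Tc by (rule lmeasurable_compact)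
  define X where "X = measure lebesgue A powr e + measure lebesgue B powr e"
  have X0: "X \<ge> 0" by (simp add: X_def)
  have claim1: "X powr d \<le> measure lebesgue (T (2 * r))" if r: "r > 0" for r
  proof -
    obtain F where F: "boxfam F" "A \<subseteq> \<Union>F" "\<forall>y\<in>\<Union>F. \<exists>x\<in>A. dist x y \<le> r"
      using grid_cover[OF A r] by blast
    obtain G where G: "boxfam G" "B \<subseteq> \<Union>G" "\<forall>y\<in>\<Union>G. \<exists>x\<in>B. dist x y \<le> r"
      using grid_cover[OF B r] by blast
    have bm: "BM (\<Union>F) (\<Union>G)" by (rule bm_boxes[OF F(1) G(1)])
    have mA: "measure lebesgue A \<le> measure lebesgue (\<Union>F)"
      using F(2) by (intro measure_mono_fmeasurable fmeasurableD lmeasurable_compact A(1) boxfam_compact F(1))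
    have mB: "measure lebesgue B \<le> measure lebesgue (\<Union>G)"
      using G(2) by (intro measure_mono_fmeasurable fmeasurableD lmeasurable_compact B(1) boxfam_compact G(1))
    have sub: "msum (\<Union>F) (\<Union>G) \<subseteq> T (2 * r)"
    proof
      fix z assume "z \<in> msum (\<Union>F) (\<Union>G)"
      then obtain y1 y2 where y: "z = y1 + y2" "y1 \<in> \<Union>F" "y2 \<in> \<Union>G" unfolding msum_def by blast
      obtain x1 where x1: "x1 \<in> A" "dist x1 y1 \<le> r" using F(3) y(2) by blast
      obtain x2 where x2: "x2 \<in> B" "dist x2 y2 \<le> r" using G(3) y(3) by blast
      have "norm ((y1 - x1) + (y2 - x2)) \<le> norm (y1 - x1) + norm (y2 - x2)" by (rule norm_triangle_ineq)
      also have "\<dots> \<le> 2 * r" using x1 x2 by (simp add: dist_norm norm_minus_commute)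
      finally have "(y1 - x1) + (y2 - x2) \<in> cball 0 (2 * r)" by simp
      moreover have "x1 + x2 \<in> S" using x1 x2 unfolding S_def msum_def by blast
      moreover have "z = (x1 + x2) + ((y1 - x1) + (y2 - x2))" using y by (simp add: algebra_simps)
      ultimately show "z \<in> T (2 * r)" unfolding T_def msum_def by blast
    qed
    have mS: "measure lebesgue (msum (\<Union>F) (\<Union>G)) \<le> measure lebesgue (T (2 * r))"
    proof (rule measure_mono_fmeasurable[OF sub _ Tm])
      have "compact (msum (\<Union>F) (\<Union>G))" unfolding msum_def
        by (intro compact_sums boxfam_compact F(1) G(1))
      then show "msum (\<Union>F) (\<Union>G) \<in> sets lebesgue" by (intro fmeasurableD lmeasurable_compact)
    qed
    have "X \<le> measure lebesgue (\<Union>F) powr e + measure lebesgue (\<Union>G) powr e"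
      unfolding X_def using mA mB e by (intro add_mono powr_mono2) auto
    also have "\<dots> \<le> measure lebesgue (msum (\<Union>F) (\<Union>G)) powr e"
      using bm unfolding BM_def e_def d_def .
    also have "\<dots> \<le> measure lebesgue (T (2 * r)) powr e"
      using mS e by (intro powr_mono2) auto
    finally show ?thesis using X0 d by (intro pow_le_from_root) (auto simp: e_def)
  qed
  define R where "R n = T (1 / (real n + 1))" for n :: nat
  have dec: "decseq R"
  proof (rule decseq_SucI)
    fix n
    have "1 / (real (Suc n) + 1) \<le> 1 / (real n + 1)" by (simp add: divide_simps)
    then show "R (Suc n) \<subseteq> R n" unfolding R_def T_def msum_def by force
  qed
  have inter: "(\<Inter>n. R n) = S"
  proof
    show "S \<subseteq> (\<Inter>n. R n)" unfolding R_def T_def msum_def by force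
    show "(\<Inter>n. R n) \<subseteq> S"
    proof
      fix z assume z: "z \<in> (\<Inter>n. R n)"
      have "z \<in> closure S" unfolding closure_approachable_le
      proof (intro allI impI)
        fix \<epsilon> :: real assume \<epsilon>: "\<epsilon> > 0"
        obtain n :: nat where n: "1 / (real n + 1) < \<epsilon>"
          using \<epsilon> by (metis nat_approx_posE of_nat_Suc add.commute)
        have "z \<in> R n" using z by blast
        then obtain w v where wv: "z = w + v" "w \<in> S" "v \<in> cball 0 (1 / (real n + 1))"
          unfolding R_def T_def msum_def by blast
        have "dist w z \<le> \<epsilon>" using wv n by (simp add: dist_norm)
        then show "\<exists>y\<in>S. dist y z \<le> \<epsilon>" using wv(2) by blast
      qed
      then show "z \<in> S" using Sc by (simp add: compact_imp_closed closure_closed)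
    qed
  qed
  have lim: "(\<lambda>n. measure lebesgue (R n)) \<longlonglongrightarrow> measure lebesgue S"
  proof -
    have "(\<lambda>n. measure lebesgue (R n)) \<longlonglongrightarrow> measure lebesgue (\<Inter>n. R n)"
    proof (rule Lim_measure_decseq)
      have Rm: "R n \<in> lmeasurable" for n unfolding R_def by (rule Tm)
      show "range R \<subseteq> sets lebesgue" using Rm fmeasurableD by blast
      show "decseq R" by (rule dec)
      show "emeasure lebesgue (R n) \<noteq> \<infinity>" for n using Rm[of n] unfolding fmeasurable_def by auto
    qed
    then show ?thesis using inter by simp
  qed
  have "X powr d \<le> measure lebesgue S"
  proof (rule LIMSEQ_le_const[OF lim], intro exI allI impI)
    fix n :: nat
    have "X powr d \<le> measure lebesgue (T (2 * (1 / (2 * (real n + 1)))))"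
      by (rule claim1) simp
    moreover have "2 * (1 / (2 * (real n + 1))) = 1 / (real n + 1)" by (simp add: field_simps)
    ultimately show "X powr d \<le> measure lebesgue (R n)" unfolding R_def by metis
  qed
  then have "X \<le> measure lebesgue S powr (1 / d)" using X0 d by (intro root_le_from_pow) auto
  then show ?thesis unfolding BM_def X_def S_def e_def d_def .
qed


lemma inner_compact:
  fixes A :: "'a::euclidean_space set"
  assumes A: "A \<in> lmeasurable" and e: "e > 0"
  shows "\<exists>K. compact K \<and> K \<subseteq> A \<and> measure lebesgue A - e \<le> measure lebesgue K"
proof -
  obtain T where T: "closed T" "T \<subseteq> A" "A - T \<in> lmeasurable" "emeasure lebesgue (A - T) < ennreal (e/2)"
    using sets_lebesgue_inner_closed[OF fmeasurableD[OF A], of "e/2"] e by auto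
  have "ennreal (measure lebesgue (A - T)) < ennreal (e/2)"
    using T(4) emeasure_eq_measure2[OF T(3)] by simp
  then have mAT: "measure lebesgue (A - T) < e/2" using e by (simp add: ennreal_less_iff)
  have Ts: "T \<in> sets lebesgue" using T(1) by (simp add: borel_closed)
  have Tm: "T \<in> lmeasurable" by (rule fmeasurableI2[OF A T(2) Ts])
  have "measure lebesgue (A - T) = measure lebesgue A - measure lebesgue T"
    by (rule measure_Diff) (use A T Ts in \<open>auto simp: fmeasurable_def\<close>)
  then have mT: "measure lebesgue T > measure lebesgue A - e/2" using mAT by simp
  define Tn where "Tn n = T \<inter> cball 0 (real n)" for n :: nat
  have Tnc: "compact (Tn n)" for n unfolding Tn_def using T(1) by (intro closed_Int_compact) auto
  have lim: "(\<lambda>n. measure lebesgue (Tn n)) \<longlonglongrightarrow> measure lebesgue (\<Union>n. Tn n)"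
  proof (rule Lim_measure_incseq)
    show "range Tn \<subseteq> sets lebesgue" using Tnc by (auto intro: fmeasurableD lmeasurable_compact)
    show "incseq Tn" unfolding Tn_def by (intro monoI) auto
    have "(\<Union>n. Tn n) \<subseteq> T" unfolding Tn_def by auto
    then have "emeasure lebesgue (\<Union>n. Tn n) \<le> emeasure lebesgue T"
      using Ts by (intro emeasure_mono) auto
    also have "\<dots> < \<infinity>" using Tm unfolding fmeasurable_def by blast
    finally show "emeasure lebesgue (\<Union>n. Tn n) \<noteq> \<infinity>" by simp
  qed
  have "(\<Union>n. Tn n) = T"
  proof
    show "(\<Union>n. Tn n) \<subseteq> T" unfolding Tn_def by auto
    show "T \<subseteq> (\<Union>n. Tn n)"
    proof
      fix z assume "z \<in> T"
      obtain n :: nat where "norm z \<le> real n" using real_arch_simple by blast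
      then show "z \<in> (\<Union>n. Tn n)" using \<open>z \<in> T\<close> unfolding Tn_def by auto
    qed
  qed
  then have lim': "(\<lambda>n. measure lebesgue (Tn n)) \<longlonglongrightarrow> measure lebesgue T" using lim by simp
  have "measure lebesgue T - e/2 < measure lebesgue T" using e by simp
  from order_tendstoD(1)[OF lim' this] obtain n where n: "measure lebesgue (Tn n) > measure lebesgue T - e/2"
    by (auto simp: eventually_sequentially)
  show ?thesis
    using n mT Tnc[of n] T(2) unfolding Tn_def by (intro exI[of _ "Tn n"]) (auto simp: Tn_def)
qed


theorem lemma6p4:
  fixes C A A' :: "'a::euclidean_space set" and x :: 'a and t :: real
  assumes "compact C" and "convex C"
    and "A \<in> sets lebesgue" and "A \<noteq> {}"
    and "t > 0" and "A' = (\<lambda>c. x + t *\<^sub>R (- c)) ` C"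
    and "emeasure lebesgue A = emeasure lebesgue A'"
  shows "emeasure lebesgue (\<Inter>a\<in>A. (\<lambda>c. a + c) ` C)
         \<le> emeasure lebesgue (\<Inter>a\<in>A'. (\<lambda>c. a + c) ` C)"
proof -
  note Cc = assms(1) and Cv = assms(2) and As = assms(3) and Ane = assms(4) and t = assms(5)
    and A'def = assms(6) and eqm = assms(7)
  define D where "D = DIM('a)"
  define d where "d = real D"
  have d: "d > 0" by (simp add: d_def D_def)
  define e where "e = 1 / d"
  have e: "e > 0" using d by (simp add: e_def)
  define B where "B = (\<Inter>a\<in>A. (\<lambda>c. a + c) ` C)"
  define B' where "B' = (\<Inter>a\<in>A'. (\<lambda>c. a + c) ` C)"
  have trc: "compact ((\<lambda>c. a + c) ` C)" for a using compact_translation[OF Cc, of a] by simp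
  have Cm: "C \<in> lmeasurable" using Cc by (rule lmeasurable_compact)
  define c where "c = measure lebesgue C"
  have c0: "c \<ge> 0" by (simp add: c_def)
  have eC: "emeasure lebesgue C = ennreal c" unfolding c_def by (rule emeasure_eq_measure2[OF Cm])
  obtain a0 where a0: "a0 \<in> A" using Ane by blast
  have Bsub: "B \<subseteq> (\<lambda>c. a0 + c) ` C" unfolding B_def using a0 by blast
  have Bcl: "closed B" unfolding B_def using trc by (intro closed_INT) (auto intro: compact_imp_closed)
  have Bc: "compact B"
  proof -
    have "B = B \<inter> (\<lambda>c. a0 + c) ` C" using Bsub by blast
    then show ?thesis using closed_Int_compact[OF Bcl trc[of a0]] by simp
  qed
  have Bm: "B \<in> lmeasurable" using Bc by (rule lmeasurable_compact)
  have eB: "emeasure lebesgue B = ennreal (measure lebesgue B)" by (rule emeasure_eq_measure2[OF Bm])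
  have B'cl: "closed B'" unfolding B'_def using trc by (intro closed_INT) (auto intro: compact_imp_closed)
  have B's: "B' \<in> sets lebesgue" using B'cl by (simp add: borel_closed)
  have mBc: "measure lebesgue B \<le> c"
  proof -
    have "measure lebesgue B \<le> measure lebesgue ((\<lambda>c. a0 + c) ` C)"
      using Bsub by (intro measure_mono_fmeasurable fmeasurableD Bm lmeasurable_compact trc)
    also have "\<dots> = c" unfolding c_def using measure_translation[of a0 C] by simp
    finally show ?thesis .
  qed
  have A'eq: "A' = (\<lambda>y. (- t) *\<^sub>R y + x) ` C" unfolding A'def by (intro image_cong) (auto simp: algebra_simps)
  have "emeasure lebesgue A' = ennreal (t ^ D * c)"
    unfolding A'eq emeasure_lebesgue_affine eC using t c0 by (simp add: D_def ennreal_mult)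
  then have eA: "emeasure lebesgue A = ennreal (t ^ D * c)" using eqm by simp
  have Am: "A \<in> lmeasurable" using As eA by (simp add: fmeasurable_def)
  have mA: "measure lebesgue A = t ^ D * c"
    using eA emeasure_eq_measure2[OF Am] t c0 by simp
  show ?thesis
  proof (cases "c = 0 \<or> B = {}")
    case True
    have nn: "0 \<le> measure lebesgue B" by (rule measure_nonneg)
    have "measure lebesgue B = 0"
    proof (cases "c = 0")
      case True then show ?thesis using mBc nn by linarith
    next
      case False then have "B = {}" using \<open>c = 0 \<or> B = {}\<close> by blast
      then show ?thesis by simp
    qed
    then have "emeasure lebesgue B = 0" using eB by simp
    then show ?thesis unfolding B_def B'_def by simp
  next
    case False
    then have cpos: "c > 0" and Bne: "B \<noteq> {}" using c0 by auto
    define \<beta> where "\<beta> = measure lebesgue B"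
    have \<beta>0: "\<beta> \<ge> 0" by (simp add: \<beta>_def)
    have claim: "\<beta> powr e + measure lebesgue K powr e \<le> c powr e" if K: "compact K" "K \<subseteq> A" for K
    proof (cases "K = {}")
      case True
      then show ?thesis using mBc \<beta>0 e by (simp add: \<beta>_def powr_mono2)
    next
      case Kne: False
      have nK: "compact (uminus ` K)" using compact_negations[OF K(1)] .
      have bm: "BM B (uminus ` K)" by (rule bm_compact[OF Bc Bne nK]) (use Kne in auto)
      have mnK: "measure lebesgue (uminus ` K) = measure lebesgue K"
      proof -
        have "uminus ` K = (\<lambda>y. (-1) *\<^sub>R y + 0) ` K" by (intro image_cong) auto
        then show ?thesis using measure_lebesgue_affine[of "-1" 0 K] by simp
      qed
      have sub: "msum B (uminus ` K) \<subseteq> C"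
      proof
        fix z assume "z \<in> msum B (uminus ` K)"
        then obtain b k where z: "z = b + - k" "b \<in> B" "k \<in> K" unfolding msum_def by blast
        have "k \<in> A" using z(3) K(2) by blast
        then have "b \<in> (\<lambda>c. k + c) ` C" using z(2) unfolding B_def by blast
        then obtain c' where "c' \<in> C" "b = k + c'" by blast
        then show "z \<in> C" using z(1) by simp
      qed
      have mS: "measure lebesgue (msum B (uminus ` K)) \<le> c"
      proof -
        have "compact (msum B (uminus ` K))" unfolding msum_def by (intro compact_sums Bc nK)
        then show ?thesis unfolding c_def using sub
          by (intro measure_mono_fmeasurable fmeasurableD Cm lmeasurable_compact)
      qed
      have "\<beta> powr e + measure lebesgue K powr e \<le> measure lebesgue (msum B (uminus ` K)) powr e"
        using bm mnK unfolding BM_def \<beta>_def e_def d_def D_def by simp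
      also have "\<dots> \<le> c powr e" using mS e by (intro powr_mono2) auto
      finally show ?thesis .
    qed
    have "\<forall>n::nat. \<exists>K. compact K \<and> K \<subseteq> A \<and> measure lebesgue A - inverse (real (Suc n)) \<le> measure lebesgue K"
      using inner_compact[OF Am] by simp
    then obtain Ks where Ks: "\<And>n. compact (Ks n)" "\<And>n. Ks n \<subseteq> A"
        "\<And>n. measure lebesgue A - inverse (real (Suc n)) \<le> measure lebesgue (Ks n)"
      by metis
    have KsA: "measure lebesgue (Ks n) \<le> measure lebesgue A" for n
      using Ks(1,2) by (intro measure_mono_fmeasurable fmeasurableD Am lmeasurable_compact)
    have limK: "(\<lambda>n. measure lebesgue (Ks n)) \<longlonglongrightarrow> measure lebesgue A"
    proof (rule tendsto_sandwich[OF _ _ _ tendsto_const])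
      show "\<forall>\<^sub>F n in sequentially. measure lebesgue A - inverse (real (Suc n)) \<le> measure lebesgue (Ks n)"
        using Ks(3) by simp
      show "\<forall>\<^sub>F n in sequentially. measure lebesgue (Ks n) \<le> measure lebesgue A" using KsA by simp
      show "(\<lambda>n. measure lebesgue A - inverse (real (Suc n))) \<longlonglongrightarrow> measure lebesgue A"
        using tendsto_diff[OF tendsto_const LIMSEQ_inverse_real_of_nat] by simp
    qed
    have mApos: "measure lebesgue A > 0" using mA t cpos by simp
    have limP: "(\<lambda>n. \<beta> powr e + measure lebesgue (Ks n) powr e) \<longlonglongrightarrow> \<beta> powr e + measure lebesgue A powr e"
      by (intro tendsto_add tendsto_const tendsto_powr[OF limK]) (use mApos in auto)
    have key: "\<beta> powr e + measure lebesgue A powr e \<le> c powr e"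
      by (rule LIMSEQ_le_const2[OF limP]) (use claim Ks in auto)
    have "measure lebesgue A powr e = t * c powr e"
    proof -
      have "measure lebesgue A powr e = (t ^ D) powr e * c powr e" using mA t c0 by (simp add: powr_mult)
      also have "(t ^ D) powr e = t"
        using t d by (simp add: powr_realpow[symmetric] powr_powr e_def d_def)
      finally show ?thesis .
    qed
    then have key2: "\<beta> powr e \<le> (1 - t) * c powr e" using key by (simp add: algebra_simps)
    show ?thesis
    proof (cases "t < 1")
      case False
      then have "(1 - t) * c powr e \<le> 0" using cpos by (simp add: mult_nonpos_nonneg)
      then have "\<beta> powr e \<le> 0" using key2 by linarith
      then have "\<beta> = 0" using \<beta>0 by (metis antisym_conv1 powr_gt_zero not_le powr_eq_0_iff)
      then have "emeasure lebesgue B = 0" using eB by (simp add: \<beta>_def)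
      then show ?thesis unfolding B_def B'_def by simp
    next
      case True
      have "\<beta> \<le> ((1 - t) * c powr e) powr d"
      proof -
        have "\<beta> = (\<beta> powr e) powr d" using \<beta>0 d by (simp add: powr_powr e_def)
        also have "\<dots> \<le> ((1 - t) * c powr e) powr d" using key2 d by (intro powr_mono2) auto
        finally show ?thesis .
      qed
      also have "((1 - t) * c powr e) powr d = (1 - t) ^ D * c"
        using True cpos d by (simp add: powr_mult powr_powr e_def powr_realpow d_def)
      finally have ble: "\<beta> \<le> (1 - t) ^ D * c" .
      define E where "E = (\<lambda>y. (1 - t) *\<^sub>R y + x) ` C"
      have eE: "emeasure lebesgue E = ennreal ((1 - t) ^ D * c)"
        unfolding E_def emeasure_lebesgue_affine eC using True c0 by (simp add: D_def ennreal_mult)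
      have EB': "E \<subseteq> B'"
      proof
        fix y assume "y \<in> E"
        then obtain c1 where c1: "c1 \<in> C" "y = (1 - t) *\<^sub>R c1 + x" unfolding E_def by blast
        show "y \<in> B'" unfolding B'_def A'def
        proof
          fix a assume "a \<in> (\<lambda>c. x + t *\<^sub>R (- c)) ` C"
          then obtain c2 where c2: "c2 \<in> C" "a = x + t *\<^sub>R (- c2)" by blast
          have "t *\<^sub>R c2 + (1 - t) *\<^sub>R c1 \<in> C"
            using Cv c1(1) c2(1) t True unfolding convex_def by auto
          moreover have "y = a + (t *\<^sub>R c2 + (1 - t) *\<^sub>R c1)" using c1(2) c2(2) by (simp add: algebra_simps)
          ultimately show "y \<in> (\<lambda>c. a + c) ` C" by blast
        qed
      qed
      have "emeasure lebesgue B = ennreal \<beta>" using eB by (simp add: \<beta>_def)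
      also have "\<dots> \<le> ennreal ((1 - t) ^ D * c)" using ble by (rule ennreal_leI)
      also have "\<dots> = emeasure lebesgue E" using eE by simp
      also have "\<dots> \<le> emeasure lebesgue B'" using EB' B's by (intro emeasure_mono)
      finally show ?thesis unfolding B_def B'_def .
    qed
  qed
qed


end
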